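(* Let $\alpha\in(1,2)$ and let $X_1$ be a random variable with characteristic function $\mathbb{E}e^{itX_1}=\exp\left(2\int_0^1(\cos(tx)-1)\frac{dx}{x^{\alpha+1}}\right)$. Then for every $t\in\mathbb{R}$, $$\exp\Big(\frac{t^2}{2-\alpha}\Big)\le\mathbb{E}\exp(tX_1)\le\exp\Big(\frac{1}{24}t^4\Big(\frac{14}{15}+\frac1{15}\cosh t\Big)\Big)\exp\Big(\frac{t^2}{2-\alpha}\Big).$$
   Context: The characteristic function equals $\exp\left(\int_{-1}^1(e^{itx}-1)\frac{dx}{|x|^{\alpha+1}}\right)$ in the symmetric principal-value sense. *)

theory Defs
  imports "HOL-Probability.Probability"
begin

end

theory Submission
  imports Defs "HOL-Complex_Analysis.Complex_Analysis" "HOL-Real_Asymp.Real_Asymp"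
begin


lemma altT:
  "p \<le> n \<Longrightarrow> (\<Sum>k\<le>n. (-1)^k * real (n choose k) * real k ^ p) = (if p < n then 0 else (-1)^n * fact n)"
proof (induction n arbitrary: p)
  case 0
  then show ?case by simp
next
  case (Suc n)
  show ?case
  proof (cases p)
    case 0
    then show ?thesis using choose_alternating_sum[of "Suc n", where 'a=real] by simp
  next
    case (Suc q)
    have qn: "q \<le> n" using Suc.prems Suc by simp
    have "(\<Sum>k\<le>Suc n. (-1)^k * real (Suc n choose k) * real k ^ p)
        = (\<Sum>j\<le>n. (-1)^(Suc j) * real (Suc n choose Suc j) * real (Suc j) ^ Suc q)"
      unfolding sum.atMost_Suc_shift using Suc by simp
    also have "\<dots> = (\<Sum>j\<le>n. - real (Suc n) * ((-1)^j * real (n choose j) * (real j + 1) ^ q))"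
    proof (rule sum.cong[OF refl])
      fix j
      have e: "real (Suc j) * real (Suc n choose Suc j) = real (Suc n) * real (n choose j)"
        using Suc_times_binomial[of j n] by (metis of_nat_mult)
      have "(-1)^(Suc j) * real (Suc n choose Suc j) * real (Suc j) ^ Suc q
          = - ((-1)^j * (real (Suc j) * real (Suc n choose Suc j)) * real (Suc j) ^ q)"
        by (simp add: algebra_simps)
      also have "\<dots> = - real (Suc n) * ((-1)^j * real (n choose j) * (real j + 1) ^ q)"
        unfolding e by (simp add: algebra_simps)
      finally show "(-1)^(Suc j) * real (Suc n choose Suc j) * real (Suc j) ^ Suc q
          = - real (Suc n) * ((-1)^j * real (n choose j) * (real j + 1) ^ q)" .
    qed
    also have "\<dots> = - real (Suc n) * (\<Sum>j\<le>n. (-1)^j * real (n choose j) * (\<Sum>r\<le>q. real (q choose r) * real j ^ r))"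
      by (simp add: sum_distrib_left binomial_ring[of "real _" 1] mult.commute)
    also have "\<dots> = - real (Suc n) * (\<Sum>r\<le>q. real (q choose r) * (\<Sum>j\<le>n. (-1)^j * real (n choose j) * real j ^ r))"
      by (simp add: sum_distrib_left sum.swap[of _ "{..n}"] algebra_simps)
    also have "\<dots> = (if p < Suc n then 0 else (-1)^(Suc n) * fact (Suc n))"
    proof (cases "q < n")
      case True
      have "(\<Sum>r\<le>q. real (q choose r) * (\<Sum>j\<le>n. (-1)^j * real (n choose j) * real j ^ r)) = 0"
        by (rule sum.neutral) (use True Suc.IH in auto)
      then show ?thesis using True Suc by simp
    next
      case False
      then have qn': "q = n" using qn by simp
      have "(\<Sum>r\<le>q. real (q choose r) * (\<Sum>j\<le>n. (-1)^j * real (n choose j) * real j ^ r))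
          = (\<Sum>r<n. real (q choose r) * (\<Sum>j\<le>n. (-1)^j * real (n choose j) * real j ^ r))
            + real (q choose n) * (\<Sum>j\<le>n. (-1)^j * real (n choose j) * real j ^ n)"
        using qn' by (simp add: lessThan_Suc_atMost[symmetric])
      also have "(\<Sum>r<n. real (q choose r) * (\<Sum>j\<le>n. (-1)^j * real (n choose j) * real j ^ r)) = 0"
        by (rule sum.neutral) (use Suc.IH in auto)
      also have "(\<Sum>j\<le>n. (-1)^j * real (n choose j) * real j ^ n) = (-1)^n * fact n"
        using Suc.IH[of n] by simp
      finally show ?thesis using qn' Suc by (simp add: algebra_simps)
    qed
    finally show ?thesis .
  qed
qed

definition TT :: "nat \<Rightarrow> nat \<Rightarrow> real" where
  "TT n p = (\<Sum>k\<le>n. (-1)^k * real (n choose k) * real k ^ p)"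

definition SS :: "nat \<Rightarrow> nat \<Rightarrow> real" where
  "SS n m = (\<Sum>k\<le>n. \<Sum>l\<le>n. real (n choose k) * real (n choose l) * (-1)^(k+l) * (real k - real l)^m)"

lemma sum_prod_gen:
  fixes c s :: real
  shows "(\<Sum>k\<in>A. \<Sum>l\<in>B. c * (f k * (s * g l))) = c * sum f A * (s * sum g B)"
proof -
  have "c * sum f A * (s * sum g B) = (c * s) * (sum f A * sum g B)" by (simp add: mult_ac)
  also have "\<dots> = (\<Sum>k\<in>A. \<Sum>l\<in>B. (c * s) * (f k * g l))" unfolding sum_product by (simp add: sum_distrib_left)
  also have "\<dots> = (\<Sum>k\<in>A. \<Sum>l\<in>B. c * (f k * (s * g l)))" by (simp add: mult_ac)
  finally show ?thesis by simp
qed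

lemma SS_expand: "SS n m = (\<Sum>p\<le>m. real (m choose p) * TT n p * ((-1)^(m-p) * TT n (m-p)))"
proof -
  have "SS n m = (\<Sum>k\<le>n. \<Sum>l\<le>n. \<Sum>p\<le>m. real (m choose p) * (((-1)^k * real (n choose k) * real k ^ p) * ((-1)^(m-p) * ((-1)^l * real (n choose l) * real l ^ (m-p)))))"
    unfolding SS_def
  proof (intro sum.cong refl)
    fix k l
    have eq: "(real k - real l)^m = (\<Sum>p\<le>m. real (m choose p) * real k ^ p * (- real l) ^ (m-p))"
      using binomial_ring[of "real k" "- real l" m] by simp
    show "real (n choose k) * real (n choose l) * (-1)^(k+l) * (real k - real l)^m =
      (\<Sum>p\<le>m. real (m choose p) * (((-1)^k * real (n choose k) * real k ^ p) * ((-1)^(m-p) * ((-1)^l * real (n choose l) * real l ^ (m-p)))))"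
      unfolding eq sum_distrib_left
      by (rule sum.cong[OF refl]) (simp add: power_minus[of "real l"] power_add mult_ac)
  qed
  also have "\<dots> = (\<Sum>p\<le>m. \<Sum>k\<le>n. \<Sum>l\<le>n. real (m choose p) * (((-1)^k * real (n choose k) * real k ^ p) * ((-1)^(m-p) * ((-1)^l * real (n choose l) * real l ^ (m-p)))))"
    by (subst sum.swap, rule sum.cong[OF refl], rule sum.swap)
  also have "\<dots> = (\<Sum>p\<le>m. real (m choose p) * TT n p * ((-1)^(m-p) * TT n (m-p)))"
    unfolding TT_def
  proof (rule sum.cong[OF refl])
    fix p
    show "(\<Sum>k\<le>n. \<Sum>l\<le>n. real (m choose p) * (((-1)^k * real (n choose k) * real k ^ p) * ((-1)^(m-p) * ((-1)^l * real (n choose l) * real l ^ (m-p))))) =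
      real (m choose p) * (\<Sum>k\<le>n. (-1)^k * real (n choose k) * real k ^ p) * ((-1)^(m-p) * (\<Sum>l\<le>n. (-1)^l * real (n choose l) * real l ^ (m-p)))"
      by (rule sum_prod_gen)
  qed
  finally show ?thesis .
qed

lemma TT_small: "p < n \<Longrightarrow> TT n p = 0"
  unfolding TT_def using altT[of p n] by simp

lemma TT_n: "TT n n = (-1)^n * fact n"
  unfolding TT_def using altT[of n n] by simp

lemma SS_small: assumes "m < 2*n" shows "SS n m = 0"
  unfolding SS_expand
proof (rule sum.neutral, intro ballI)
  fix p assume "p \<in> {..m}"
  show "real (m choose p) * TT n p * ((-1)^(m-p) * TT n (m-p)) = 0"
  proof (cases "p < n")
    case True then show ?thesis by (simp add: TT_small)
  next
    case False then have "m - p < n" using assms by simp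
    then show ?thesis by (simp add: TT_small)
  qed
qed

lemma SS_2n: "SS n (2*n) = (-1)^n * fact (2*n)"
proof -
  have "SS n (2*n) = (\<Sum>p\<in>{n}. real ((2*n) choose p) * TT n p * ((-1)^(2*n-p) * TT n (2*n-p)))"
    unfolding SS_expand
  proof (rule sum.mono_neutral_right)
    show "\<forall>p\<in>{..2*n} - {n}. real ((2*n) choose p) * TT n p * ((-1)^(2*n-p) * TT n (2*n-p)) = 0"
    proof
      fix p assume p: "p \<in> {..2*n} - {n}"
      show "real ((2*n) choose p) * TT n p * ((-1)^(2*n-p) * TT n (2*n-p)) = 0"
      proof (cases "p < n")
        case True then show ?thesis by (simp add: TT_small)
      next
        case False then have "2*n - p < n" using p by auto
        then show ?thesis by (simp add: TT_small)
      qed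
    qed
  qed auto
  also have "\<dots> = real ((2*n) choose n) * (fact n * fact n) * (-1)^n"
    by (simp add: TT_n algebra_simps power_add[symmetric] mult_2)
  also have "real ((2*n) choose n) * (fact n * fact n) = fact (2*n)"
    by (simp add: binomial_fact)
  finally show ?thesis by simp
qed



lemma Dlim: "(\<lambda>j. (2 - 2 * cos (x / real (Suc j))) * real (Suc j)^2) \<longlonglongrightarrow> x^2"
proof -
  have "((\<lambda>N. (2 - 2 * cos (x / N)) * N^2) \<longlongrightarrow> x*x) at_top"
    by real_asymp
  then have "((\<lambda>N. (2 - 2 * cos (x / N)) * N^2) \<longlongrightarrow> x^2) at_top"
    by (simp add: power2_eq_square)
  then show ?thesis
    by (rule filterlim_compose) (rule filterlim_compose[OF filterlim_real_sequentially filterlim_Suc])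
qed

lemma D_le: "(2 - 2 * cos y) \<le> (y::real)^2"
proof -
  have "cos y = 1 - 2 * sin (y/2)^2" using cos_double_sin[of "y/2"] by simp
  moreover have "sin (y/2)^2 \<le> (y/2)^2"
    using abs_sin_x_le_abs_x[of "y/2"] by (metis abs_ge_zero power2_abs power_mono)
  ultimately show ?thesis by (simp add: power_divide)
qed

lemma D_nonneg: "0 \<le> 2 - 2 * cos (y::real)"
  using cos_le_one[of y] by simp

lemma fatou_moment:
  fixes \<mu> :: "real measure"
  assumes rd: "real_distribution \<mu>"
    and lim: "(\<lambda>j. LINT x|\<mu>. ((2 - 2 * cos (x / real (Suc j))) * real (Suc j)^2)^n) \<longlonglongrightarrow> r"
  shows "(\<integral>\<^sup>+x. ennreal (x^(2*n)) \<partial>\<mu>) = ennreal r" "0 \<le> r"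
proof -
  interpret real_distribution \<mu> by (rule rd)
  define D where "D j x = ((2 - 2 * cos (x / real (Suc j))) * real (Suc j)^2)^n" for j x
  have Dnn: "0 \<le> D j x" for j x unfolding D_def using D_nonneg by simp
  have Dle: "D j x \<le> x^(2*n)" for j x
  proof -
    have "(2 - 2 * cos (x / real (Suc j))) * real (Suc j)^2 \<le> (x / real (Suc j))^2 * real (Suc j)^2"
      by (rule mult_right_mono[OF D_le]) simp
    also have "\<dots> = x^2" by (simp add: power_divide)
    finally show ?thesis unfolding D_def power_mult
      by (intro power_mono) (use D_nonneg in simp_all)
  qed
  have Dmeas[measurable]: "D j \<in> borel_measurable \<mu>" for j unfolding D_def by measurable
  have Dint: "integrable \<mu> (D j)" for j
  proof (rule integrable_const_bound[where B="(4 * real (Suc j)^2)^n"])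
    show "AE x in \<mu>. norm (D j x) \<le> (4 * real (Suc j)^2)^n"
    proof (rule AE_I2)
      fix x
      have le4: "(2 - 2 * cos (x / real (Suc j))) * real (Suc j)^2 \<le> 4 * real (Suc j)^2"
        by (rule mult_right_mono) (smt (verit) cos_ge_minus_one, simp)
      have nn: "0 \<le> (2 - 2 * cos (x / real (Suc j))) * real (Suc j)^2"
        using D_nonneg[of "x / real (Suc j)"] by simp
      show "norm (D j x) \<le> (4 * real (Suc j)^2)^n"
        unfolding D_def real_norm_def power_abs abs_of_nonneg[OF nn] by (rule power_mono[OF le4 nn])
    qed
  qed simp
  have nnD: "(\<integral>\<^sup>+x. ennreal (D j x) \<partial>\<mu>) = ennreal (LINT x|\<mu>. D j x)" for j
    by (rule nn_integral_eq_integral[OF Dint]) (simp add: Dnn)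
  have limD: "(\<lambda>j. LINT x|\<mu>. D j x) \<longlonglongrightarrow> r" using lim unfolding D_def .
  then show r0: "0 \<le> r"
    by (rule LIMSEQ_le_const) (use Dnn in \<open>auto intro: integral_nonneg_AE\<close>)
  have ptw: "(\<lambda>j. D j x) \<longlonglongrightarrow> x^(2*n)" for x
    unfolding D_def power_mult by (intro tendsto_intros Dlim)
  have "(\<integral>\<^sup>+x. ennreal (x^(2*n)) \<partial>\<mu>) = (\<integral>\<^sup>+x. liminf (\<lambda>j. ennreal (D j x)) \<partial>\<mu>)"
  proof (rule nn_integral_cong)
    fix x
    have "(\<lambda>j. ennreal (D j x)) \<longlonglongrightarrow> ennreal (x^(2*n))"
      by (rule tendsto_ennrealI[OF ptw])
    then show "ennreal (x^(2*n)) = liminf (\<lambda>j. ennreal (D j x))"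
      by (simp add: lim_imp_Liminf)
  qed
  also have "\<dots> \<le> liminf (\<lambda>j. \<integral>\<^sup>+x. ennreal (D j x) \<partial>\<mu>)"
    by (rule nn_integral_liminf) simp
  also have "\<dots> = ennreal r"
  proof -
    have "(\<lambda>j. \<integral>\<^sup>+x. ennreal (D j x) \<partial>\<mu>) \<longlonglongrightarrow> ennreal r"
      unfolding nnD by (rule tendsto_ennrealI[OF limD])
    then show ?thesis by (simp add: lim_imp_Liminf)
  qed
  finally have le1: "(\<integral>\<^sup>+x. ennreal (x^(2*n)) \<partial>\<mu>) \<le> ennreal r" .
  have "ennreal r \<le> (\<integral>\<^sup>+x. ennreal (x^(2*n)) \<partial>\<mu>)"
  proof (rule LIMSEQ_le_const2[OF tendsto_ennrealI[OF limD]], intro exI allI impI)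
    fix j
    have "ennreal (LINT x|\<mu>. D j x) = (\<integral>\<^sup>+x. ennreal (D j x) \<partial>\<mu>)" by (simp add: nnD)
    also have "\<dots> \<le> (\<integral>\<^sup>+x. ennreal (x^(2*n)) \<partial>\<mu>)"
      by (rule nn_integral_mono) (simp add: Dle)
    finally show "ennreal (LINT x|\<mu>. D j x) \<le> (\<integral>\<^sup>+x. ennreal (x^(2*n)) \<partial>\<mu>)" .
  qed
  with le1 show "(\<integral>\<^sup>+x. ennreal (x^(2*n)) \<partial>\<mu>) = ennreal r" by (rule antisym)
qed



lemma powr_int:
  fixes a :: real assumes a: "a > -1"
  shows "set_integrable lborel {0<..1} (\<lambda>x. x powr a)" "(LBINT x:{0<..1}. x powr a) = 1/(a+1)"
proof -
  have hk0: "((\<lambda>x. x powr a) has_integral (1/(a+1))) {0..1}"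
    using has_integral_powr_from_0[of a 1] a by simp
  have hk: "((\<lambda>x. x powr a) has_integral (1/(a+1))) {0<..1}"
    by (rule has_integral_spike_set_eq[THEN iffD1, OF _ _ hk0]; rule negligible_subset[of "{0}"]; auto)
  have "(\<lambda>x. x powr a) absolutely_integrable_on {0<..1}"
    by (rule nonnegative_absolutely_integrable_1) (use hk in \<open>auto simp: has_integral_integrable\<close>)
  then have "set_integrable lebesgue {0<..1} (\<lambda>x. x powr a)"
    by (simp add: absolutely_integrable_on_def)
  moreover have m: "(\<lambda>x. indicator {0<..1::real} x *\<^sub>R x powr a) \<in> borel_measurable lborel"
    by measurable
  ultimately show si: "set_integrable lborel {0<..1} (\<lambda>x. x powr a)"
    unfolding set_integrable_def using integrable_completion[OF m] by blast
  show "(LBINT x:{0<..1}. x powr a) = 1/(a+1)"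
    using set_borel_integral_eq_integral(2)[OF si] hk integral_unique by metis
qed

definition cc :: "real \<Rightarrow> nat \<Rightarrow> real" where
  "cc \<alpha> m = (if even m \<and> m \<noteq> 0 then 1 / (fact m * (real m - \<alpha>)) else 0)"

lemma cos_coeff_abs_le: "\<bar>cos_coeff m\<bar> \<le> 1 / fact m"
  by (simp add: cos_coeff_def)

lemma L_series:
  fixes \<alpha> s :: real
  assumes a2: "\<alpha> < 2"
  shows "(LBINT x:{0<..1}. (cos (s*x) - 1) / x powr (\<alpha>+1)) = (\<Sum>m. cc \<alpha> m * (-1)^(m div 2) * s^m)"
proof -
  define f where "f m x = indicator {0<..1::real} x * (if m = 0 then 0 else cos_coeff m * s^m * x powr (real m - \<alpha> - 1))" for m x
  define b where "b m = (if m = 0 then 0 else cos_coeff m * s^m / (real m - \<alpha>))" for m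
  have good: "even m \<Longrightarrow> m \<noteq> 0 \<Longrightarrow> real m - \<alpha> - 1 > -1" for m
  proof -
    assume "even m" "m \<noteq> 0"
    then have "m \<ge> 2" by presburger
    then show ?thesis using a2 by simp
  qed
  have zero: "\<not> (even m \<and> m \<noteq> 0) \<Longrightarrow> f m = (\<lambda>x. 0) \<and> b m = 0" for m
    by (auto simp: f_def b_def cos_coeff_def fun_eq_iff)
  have fint: "integrable lborel (f m) \<and> (LINT x|lborel. f m x) = b m \<and> (LINT x|lborel. norm (f m x)) = \<bar>b m\<bar>" for m
  proof (cases "even m \<and> m \<noteq> 0")
    case True
    note pi = powr_int[OF good[OF conjunct1[OF True] conjunct2[OF True]]]
    have fe: "f m = (\<lambda>x. (cos_coeff m * s^m) * (indicator {0<..1} x * x powr (real m - \<alpha> - 1)))"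
      using True by (auto simp: f_def fun_eq_iff)
    have ne: "(\<lambda>x. norm (f m x)) = (\<lambda>x. \<bar>cos_coeff m * s^m\<bar> * (indicator {0<..1} x * x powr (real m - \<alpha> - 1)))"
      unfolding fe by (auto simp: fun_eq_iff abs_mult indicator_def)
    have ii: "integrable lborel (\<lambda>x. indicator {0<..1::real} x * x powr (real m - \<alpha> - 1))"
      using pi(1) by (simp add: set_integrable_def)
    have iv: "(LINT x|lborel. indicator {0<..1::real} x * x powr (real m - \<alpha> - 1)) = 1 / (real m - \<alpha>)"
      using pi(2) by (simp add: set_lebesgue_integral_def)
    have pos: "real m - \<alpha> > 0" using good[of m] True by simp
    show ?thesis
      unfolding ne using True pos
      by (auto simp: fe iv b_def ii integrable_mult_right[OF ii] abs_mult abs_divide)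
  next
    case False
    then show ?thesis using zero[OF False] by simp
  qed
  have bsum: "summable (\<lambda>m. \<bar>b m\<bar>)"
  proof (rule summable_comparison_test[OF _ summable_mult[OF summable_exp[of "\<bar>s\<bar>"], of "1 / (2 - \<alpha>)"]])
    show "\<exists>N. \<forall>m\<ge>N. norm \<bar>b m\<bar> \<le> 1 / (2 - \<alpha>) * (inverse (fact m) * \<bar>s\<bar> ^ m)"
    proof (intro exI allI impI)
      fix m :: nat
      show "norm \<bar>b m\<bar> \<le> 1 / (2 - \<alpha>) * (inverse (fact m) * \<bar>s\<bar> ^ m)"
      proof (cases "even m \<and> m \<noteq> 0")
        case True
        then have "m \<ge> 2" by presburger
        then have d: "2 - \<alpha> \<le> real m - \<alpha>" "0 < 2 - \<alpha>" using a2 by auto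
        have "\<bar>b m\<bar> = (1 / fact m) * \<bar>s\<bar>^m * (1 / (real m - \<alpha>))"
          using True d by (simp add: b_def cos_coeff_def abs_mult abs_divide power_abs)
        also have "\<dots> \<le> (1 / fact m) * \<bar>s\<bar>^m * (1 / (2 - \<alpha>))"
          by (rule mult_left_mono) (use d in \<open>auto simp: frac_le\<close>)
        finally show ?thesis by (simp add: field_simps)
      next
        case False
        then show ?thesis using zero[OF False] a2 by simp
      qed
    qed
  qed
  have ptw: "(\<lambda>m. f m x) sums (indicator {0<..1} x * ((cos (s*x) - 1) / x powr (\<alpha>+1)))" for x
  proof (cases "x \<in> {0<..1}")
    case True
    then have x0: "x > 0" by simp
    have c1: "(\<lambda>m. cos_coeff m * (s*x)^m) sums cos (s*x)"
      using cos_converges[of "s*x"] by simp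
    have c2: "(\<lambda>m. cos_coeff m * (s*x)^m - (if m = 0 then 1 else 0)) sums (cos (s*x) - 1)"
      by (rule sums_diff[OF c1]) (use sums_single[of 0 "\<lambda>_. 1::real"] in simp)
    have c3: "(\<lambda>m. (cos_coeff m * (s*x)^m - (if m = 0 then 1 else 0)) * (1 / x powr (\<alpha>+1))) sums ((cos (s*x) - 1) * (1 / x powr (\<alpha>+1)))"
      by (rule sums_mult2[OF c2])
    have eq: "(cos_coeff m * (s*x)^m - (if m = 0 then 1 else 0)) * (1 / x powr (\<alpha>+1)) = f m x" for m
    proof (cases "m = 0")
      case True then show ?thesis by (simp add: f_def cos_coeff_def)
    next
      case False
      have "x powr (real m - \<alpha> - 1) = x^m / x powr (\<alpha>+1)"
        using x0 by (simp add: powr_diff[symmetric] powr_realpow[symmetric] algebra_simps)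
      then show ?thesis using False True by (simp add: f_def power_mult_distrib)
    qed
    show ?thesis using c3 True unfolding eq by simp
  next
    case False
    then show ?thesis by (simp add: f_def)
  qed
  have "(LBINT x:{0<..1}. (cos (s*x) - 1) / x powr (\<alpha>+1)) = (LINT x|lborel. (\<Sum>m. f m x))"
    unfolding set_lebesgue_integral_def
    by (rule Bochner_Integration.integral_cong[OF refl]) (use ptw sums_unique in \<open>auto\<close>)
  also have "\<dots> = (\<Sum>m. LINT x|lborel. f m x)"
  proof (rule integral_suminf)
    show "integrable lborel (f m)" for m using fint by blast
    show "AE x in lborel. summable (\<lambda>m. norm (f m x))"
    proof (rule AE_I2)
      fix x :: real
      show "summable (\<lambda>m. norm (f m x))"
      proof (cases "x \<in> {0<..1}")
        case False then show ?thesis by (simp add: f_def)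
      next
        case True
        then have x0: "0 < x" "x \<le> 1" by auto
        show ?thesis
        proof (rule summable_comparison_test[OF _ summable_mult[OF summable_exp[of "\<bar>s\<bar>"], of "x powr (- \<alpha> - 1)"]])
          show "\<exists>N. \<forall>m\<ge>N. norm (norm (f m x)) \<le> x powr (- \<alpha> - 1) * (inverse (fact m) * \<bar>s\<bar> ^ m)"
          proof (intro exI allI impI)
            fix m :: nat
            have p1: "x powr (real m - \<alpha> - 1) = x^m * x powr (- \<alpha> - 1)"
            proof -
              have "x powr (real m - \<alpha> - 1) = x powr (real m + (- \<alpha> - 1))" by (simp add: algebra_simps)
              also have "\<dots> = x powr real m * x powr (- \<alpha> - 1)" by (rule powr_add)
              also have "\<dots> = x^m * x powr (- \<alpha> - 1)" using x0 by (simp add: powr_realpow)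
              finally show ?thesis .
            qed
            have p2: "x^m \<le> 1" using x0 by (simp add: power_le_one)
            have "norm (norm (f m x)) \<le> \<bar>cos_coeff m\<bar> * (\<bar>s\<bar>^m * x powr (real m - \<alpha> - 1))"
              using True by (cases "m = 0") (auto simp: f_def abs_mult power_abs)
            also have "\<dots> \<le> (1 / fact m) * (\<bar>s\<bar>^m * x powr (real m - \<alpha> - 1))"
              by (rule mult_right_mono[OF cos_coeff_abs_le]) simp
            also have "\<dots> = (1 / fact m) * \<bar>s\<bar>^m * (x^m * x powr (- \<alpha> - 1))"
              unfolding p1 by simp
            finally have "norm (norm (f m x)) \<le> (1 / fact m) * \<bar>s\<bar>^m * (x^m * x powr (- \<alpha> - 1))" .
            also have "\<dots> \<le> (1 / fact m) * \<bar>s\<bar>^m * (1 * x powr (- \<alpha> - 1))"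
              by (intro mult_left_mono mult_right_mono p2) auto
            finally show "norm (norm (f m x)) \<le> x powr (- \<alpha> - 1) * (inverse (fact m) * \<bar>s\<bar> ^ m)"
              by (simp add: field_simps)
          qed
        qed
      qed
    qed
    show "summable (\<lambda>m. LINT x|lborel. norm (f m x))"
      using fint bsum by simp
  qed
  also have "\<dots> = (\<Sum>m. cc \<alpha> m * (-1)^(m div 2) * s^m)"
  proof (rule arg_cong[where f=suminf], rule ext)
    fix m
    show "(LINT x|lborel. f m x) = cc \<alpha> m * (-1)^(m div 2) * s^m"
      using fint[of m] by (simp add: b_def cc_def cos_coeff_def)
  qed
  finally show ?thesis .
qed



lemma cc_bound:
  assumes a2: "\<alpha> < 2"
  shows "\<bar>cc \<alpha> m\<bar> \<le> 1 / (2 - \<alpha>) * inverse (fact m)"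
proof (cases "even m \<and> m \<noteq> 0")
  case True
  then have "m \<ge> 2" by presburger
  then have d: "2 - \<alpha> \<le> real m - \<alpha>" "0 < 2 - \<alpha>" using a2 by auto
  have "\<bar>cc \<alpha> m\<bar> = inverse (fact m) * (1 / (real m - \<alpha>))"
    using True d by (simp add: cc_def field_simps)
  also have "\<dots> \<le> inverse (fact m) * (1 / (2 - \<alpha>))"
    by (rule mult_left_mono) (use d in \<open>auto simp: frac_le\<close>)
  finally show ?thesis by (simp add: mult.commute)
next
  case False
  have "cc \<alpha> m = 0" unfolding cc_def by (rule if_not_P[OF False])
  then show ?thesis using a2 by simp
qed

lemma cc_nonneg: "\<alpha> < 2 \<Longrightarrow> 0 \<le> cc \<alpha> m"
proof -
  assume a2: "\<alpha> < 2"
  show ?thesis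
  proof (cases "even m \<and> m \<noteq> 0")
    case True
    then have "m \<ge> 2" by presburger
    then show ?thesis using True a2 by (simp add: cc_def)
  next
    case False
    have "cc \<alpha> m = 0" unfolding cc_def by (rule if_not_P[OF False])
    then show ?thesis by simp
  qed
qed

lemma cc_summable:
  fixes z :: "'a::{real_normed_field,banach}"
  assumes a2: "\<alpha> < 2"
  shows "summable (\<lambda>m. of_real (cc \<alpha> m) * z^m)"
proof (rule summable_comparison_test[OF _ summable_mult[OF summable_exp[of "norm z"], of "1 / (2 - \<alpha>)"]])
  show "\<exists>N. \<forall>m\<ge>N. norm (of_real (cc \<alpha> m) * z^m) \<le> 1 / (2 - \<alpha>) * (inverse (fact m) * norm z ^ m)"
  proof (intro exI allI impI)
    fix m :: nat
    have "norm (of_real (cc \<alpha> m) * z^m) = \<bar>cc \<alpha> m\<bar> * norm z ^ m" by (simp add: norm_mult norm_power)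
    also have "\<dots> \<le> (1 / (2 - \<alpha>) * inverse (fact m)) * norm z ^ m"
      by (rule mult_right_mono[OF cc_bound[OF a2]]) simp
    finally show "norm (of_real (cc \<alpha> m) * z^m) \<le> 1 / (2 - \<alpha>) * (inverse (fact m) * norm z ^ m)"
      by (simp add: mult_ac)
  qed
qed

lemma lin_aux: "2*(p - (a + b)) \<le> c \<Longrightarrow> b \<le> e \<Longrightarrow> 2*a = A \<Longrightarrow> f = 2*e \<Longrightarrow> 2*p \<le> A + f + (c::real)"
  by (smt (verit))

lemma series_bounds:
  fixes \<alpha> t :: real
  assumes a2: "\<alpha> < 2"
  shows "t\<^sup>2 / (2 - \<alpha>) \<le> 2 * (\<Sum>m. cc \<alpha> m * t^m)"
    and "2 * (\<Sum>m. cc \<alpha> m * t^m) \<le> 1/24 * t^4 * (14/15 + 1/15 * cosh t) + t\<^sup>2 / (2 - \<alpha>)"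
proof -
  define \<psi> where "\<psi> = (\<Sum>m. cc \<alpha> m * t^m)"
  have summ: "summable (\<lambda>m. cc \<alpha> m * t^m)" using cc_summable[OF a2, of t] by simp
  have ser: "(\<lambda>m. cc \<alpha> m * t^m) sums \<psi>" unfolding \<psi>_def using summ by (rule summable_sums)
  have tnn: "0 \<le> cc \<alpha> m * t^m" for m
  proof (cases "even m")
    case True
    then show ?thesis using cc_nonneg[OF a2, of m] by (simp add: zero_le_even_power)
  next
    case False
    then show ?thesis by (simp add: cc_def)
  qed
  have c2: "cc \<alpha> 2 * t^2 = t\<^sup>2 / (2 * (2 - \<alpha>))" by (simp add: cc_def)
  have "cc \<alpha> 2 * t^2 \<le> \<psi>"
    using sum_le_suminf[OF summ, of "{2}"] tnn unfolding \<psi>_def by simp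
  then show "t\<^sup>2 / (2 - \<alpha>) \<le> 2 * (\<Sum>m. cc \<alpha> m * t^m)"
    unfolding \<psi>_def[symmetric] c2 using a2 by (simp add: field_simps)
  define S6 where "S6 = (\<Sum>m<6. cc \<alpha> m * t^m)"
  have S6v: "S6 = t\<^sup>2 / (2 * (2 - \<alpha>)) + t^4 / (24 * (4 - \<alpha>))"
  proof -
    have st: "{..<6::nat} = {0,1,2,3,4,5}" by auto
    have f4: "fact 4 = (24::real)" by (simp add: fact_numeral)
    show ?thesis unfolding S6_def st by (simp add: cc_def f4)
  qed
  have tail: "(\<lambda>j. cc \<alpha> (j+6) * t^(j+6)) sums (\<psi> - S6)"
    unfolding S6_def by (rule sums_split_initial_segment[OF ser])
  define e where "e m = (if even m then t^m / fact m else 0)" for m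
  have ce: "e sums cosh t"
  proof -
    have eq: "(\<lambda>n. if even n then t^n /\<^sub>R fact n else 0) = e"
      by (rule ext) (simp add: e_def divide_inverse mult.commute)
    show ?thesis using cosh_converges[of t] unfolding eq .
  qed
  have ctail: "(\<lambda>j. e (j+2)) sums (cosh t - 1)"
    using sums_split_initial_segment[OF ce, of 2] by (simp add: e_def eval_nat_numeral)
  have trm: "2 * (cc \<alpha> (j+6) * t^(j+6)) \<le> t^4 / 360 * e (j+2)" for j
  proof (cases "even j")
    case False
    then show ?thesis by (simp add: cc_def e_def)
  next
    case True
    define q where "q = (fact (j+2) :: real)"
    define P where "P = real ((j+3)*(j+4)*(j+5)*(j+6))"
    define D where "D = real (j+6) - \<alpha>"
    have q0: "0 < q" unfolding q_def by simp
    have P360: "360 \<le> P" unfolding P_def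
    proof -
      have "3*4*5*6 \<le> (j+3)*(j+4)*(j+5)*(j+6)" by (intro mult_mono) auto
      then show "360 \<le> real ((j+3)*(j+4)*(j+5)*(j+6))" by linarith
    qed
    have D4: "4 \<le> D" unfolding D_def using a2 by simp
    have fq: "fact (j+6) = P * q"
    proof -
      have "j + 6 = Suc (Suc (Suc (Suc (j+2))))" by simp
      then have "(fact (j+6) :: real) = fact (Suc (Suc (Suc (Suc (j+2)))))" by metis
      also have "\<dots> = P * q" unfolding P_def q_def by (simp add: algebra_simps)
      finally show ?thesis .
    qed
    have T: "t^(j+6) = t^4 * t^(j+2)"
    proof -
      have "t^(j+6) = t^(4+(j+2))" by (rule arg_cong[where f="\<lambda>k. t^k"]) simp
      also have "\<dots> = t^4 * t^(j+2)" by (rule power_add)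
      finally show ?thesis .
    qed
    have e1: "0 \<le> t^4" by (rule zero_le_even_power) simp
    have e2: "0 \<le> t^(j+2)" by (rule zero_le_even_power) (use True in simp)
    have Tnn: "0 \<le> t^4 * t^(j+2)" using e1 e2 by (rule mult_nonneg_nonneg)
    have lhs: "2 * (cc \<alpha> (j+6) * t^(j+6)) = (t^4 * t^(j+2)) * (2 / (P * q * D))"
      using True unfolding T by (simp add: cc_def fq D_def)
    have rhs: "t^4 / 360 * e (j+2) = (t^4 * t^(j+2)) * (1 / (360 * q))"
      using True by (simp add: e_def q_def)
    have "2 / (P * q * D) \<le> 1 / (360 * q)"
    proof -
      have "360 * q * 4 \<le> P * q * D"
        by (intro mult_mono) (use P360 D4 q0 in auto)
      then have "2 * (360 * q) \<le> P * q * D" using q0 by linarith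
      then show ?thesis using q0 P360 D4 by (simp add: field_simps)
    qed
    then show ?thesis unfolding lhs rhs by (rule mult_left_mono[OF _ Tnn])
  qed
  have h2: "t^4/24 = 2 * (t^4/48)" by simp
  have "2 * (\<psi> - S6) \<le> t^4 / 360 * (cosh t - 1)"
    by (rule sums_le[OF trm sums_mult[OF tail, of 2] sums_mult[OF ctail, of "t^4/360"]])
  moreover have "t^4 / (24 * (4 - \<alpha>)) \<le> t^4 / 48"
  proof (rule divide_left_mono)
    show "0 \<le> t^4" by (rule zero_le_even_power) simp
  qed (use a2 in auto)
  moreover have h: "2 * (t\<^sup>2 / (2 * (2 - \<alpha>))) = t\<^sup>2 / (2 - \<alpha>)" using a2 by (simp add: field_simps)
  ultimately have "2 * \<psi> \<le> t\<^sup>2 / (2 - \<alpha>) + t^4/24 + t^4 / 360 * (cosh t - 1)"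
    unfolding S6v using h2 by (rule lin_aux)
  moreover have eq: "t^4/24 + t^4/360*(cosh t - 1) = 1/24 * t^4 * (14/15 + 1/15 * cosh t)"
    by (simp add: field_simps)
  ultimately show "2 * (\<Sum>m. cc \<alpha> m * t^m) \<le> 1/24 * t^4 * (14/15 + 1/15 * cosh t) + t\<^sup>2 / (2 - \<alpha>)"
    unfolding \<psi>_def[symmetric] by linarith
qed



lemma trig_expand:
  "complex_of_real ((2 - 2 * cos u)^n) =
    (\<Sum>k\<le>n. \<Sum>l\<le>n. complex_of_real (real (n choose k) * real (n choose l) * (-1)^(k+l)) * iexp ((real k - real l) * u))"
proof -
  define e where "e = exp (\<i> * complex_of_real u)"
  define e' where "e' = exp (- (\<i> * complex_of_real u))"
  have ee: "e * e' = 1" unfolding e_def e'_def by (simp add: exp_add[symmetric])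
  have c: "complex_of_real (2 - 2 * cos u) = (1 - e) * (1 - e')"
  proof -
    have h: "2 * complex_of_real (cos u) = e + e'"
      unfolding e_def e'_def using cos_exp_eq[of "complex_of_real u"] by (simp add: cos_of_real mult.commute)
    have "complex_of_real (2 - 2 * cos u) = 2 - 2 * complex_of_real (cos u)" by simp
    also have "\<dots> = 2 - (e + e')" by (simp only: h)
    also have "\<dots> = (1 - e) * (1 - e')" using ee by (simp add: algebra_simps)
    finally show ?thesis .
  qed
  have b1: "(1 - e)^n = (\<Sum>k\<le>n. of_nat (n choose k) * (-e)^k)"
    using binomial_ring[of "-e" 1 n] by simp
  have b2: "(1 - e')^n = (\<Sum>l\<le>n. of_nat (n choose l) * (-e')^l)"
    using binomial_ring[of "-e'" 1 n] by simp
  have tm: "(-e)^k * (-e')^l = complex_of_real ((-1)^(k+l)) * iexp ((real k - real l) * u)" for k l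
  proof -
    have "(-e)^k * (-e')^l = (-1)^(k+l) * (e^k * e'^l)"
      unfolding power_minus[of e] power_minus[of e'] power_add by (simp add: mult_ac)
    also have "e^k * e'^l = exp (of_nat k * (\<i> * complex_of_real u)) * exp (of_nat l * (- (\<i> * complex_of_real u)))"
      unfolding e_def e'_def exp_of_nat_mult ..
    also have "\<dots> = exp (of_nat k * (\<i> * complex_of_real u) + of_nat l * (- (\<i> * complex_of_real u)))"
      by (rule exp_add[symmetric])
    also have "\<dots> = iexp ((real k - real l) * u)"
      by (rule arg_cong[where f=exp]) (simp add: algebra_simps)
    finally show ?thesis by simp
  qed
  have "complex_of_real ((2 - 2 * cos u)^n) = (1 - e)^n * (1 - e')^n"
    by (simp only: of_real_power c power_mult_distrib)
  also have "\<dots> = (\<Sum>k\<le>n. \<Sum>l\<le>n. (of_nat (n choose k) * (-e)^k) * (of_nat (n choose l) * (-e')^l))"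
    unfolding b1 b2 sum_product ..
  also have "\<dots> = (\<Sum>k\<le>n. \<Sum>l\<le>n. complex_of_real (real (n choose k) * real (n choose l) * (-1)^(k+l)) * iexp ((real k - real l) * u))"
  proof (intro sum.cong refl)
    fix k l
    have "(of_nat (n choose k) * (-e)^k) * (of_nat (n choose l) * (-e')^l) = complex_of_real (real (n choose k) * real (n choose l)) * ((-e)^k * (-e')^l)"
      by (simp add: mult_ac)
    then show "(of_nat (n choose k) * (-e)^k) * (of_nat (n choose l) * (-e')^l) = complex_of_real (real (n choose k) * real (n choose l) * (-1)^(k+l)) * iexp ((real k - real l) * u)"
      unfolding tm by (simp add: mult_ac)
  qed
  finally show ?thesis .
qed

lemma moments_from_char:
  fixes \<mu> :: "real measure" and F :: "complex \<Rightarrow> complex"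
  assumes rd: "real_distribution \<mu>" and holF: "F holomorphic_on UNIV"
    and chF: "\<And>s. char \<mu> s = F (\<i> * complex_of_real s)"
  shows "(\<integral>\<^sup>+x. ennreal (x^(2*n)) \<partial>\<mu>) = ennreal (Re ((deriv ^^ (2*n)) F 0 / fact (2*n)) * fact (2*n))"
    and "0 \<le> Re ((deriv ^^ (2*n)) F 0 / fact (2*n)) * fact (2*n)"
proof -
  interpret real_distribution \<mu> by (rule rd)
  define d where "d m = (deriv ^^ m) F 0 / fact m" for m
  have Fser: "(\<lambda>m. d m * w^m) sums F w" for w
  proof -
    have "F holomorphic_on ball 0 (norm w + 1)" using holF holomorphic_on_subset by blast
    from holomorphic_power_series[OF this, of w] show ?thesis by (simp add: d_def)
  qed
  define w where "w k l = complex_of_real (real (n choose k) * real (n choose l) * (-1)^(k+l))" for k l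
  define I where "I h = (LINT x|\<mu>. (2 - 2 * cos (h * x))^n)" for h
  have iexp_int: "integrable \<mu> (\<lambda>x. iexp (c * x))" for c
    by (rule integrable_iexp) auto
  have I_char: "complex_of_real (I h) = (\<Sum>k\<le>n. \<Sum>l\<le>n. w k l * char \<mu> ((real k - real l) * h))" for h
  proof -
    have "complex_of_real (I h) = (CLINT x|\<mu>. complex_of_real ((2 - 2 * cos (h * x))^n))"
      unfolding I_def by (rule integral_complex_of_real[symmetric])
    also have "\<dots> = (CLINT x|\<mu>. \<Sum>k\<le>n. \<Sum>l\<le>n. w k l * iexp (((real k - real l) * h) * x))"
      by (rule Bochner_Integration.integral_cong[OF refl]) (simp only: trig_expand w_def mult.assoc)
    also have "\<dots> = (\<Sum>k\<le>n. CLINT x|\<mu>. \<Sum>l\<le>n. w k l * iexp (((real k - real l) * h) * x))"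
      by (rule Bochner_Integration.integral_sum, rule Bochner_Integration.integrable_sum, rule integrable_mult_right, rule iexp_int)
    also have "\<dots> = (\<Sum>k\<le>n. \<Sum>l\<le>n. CLINT x|\<mu>. w k l * iexp (((real k - real l) * h) * x))"
      by (intro sum.cong refl Bochner_Integration.integral_sum, rule integrable_mult_right, rule iexp_int)
    also have "\<dots> = (\<Sum>k\<le>n. \<Sum>l\<le>n. w k l * char \<mu> ((real k - real l) * h))"
      unfolding char_def by (intro sum.cong refl) simp
    finally show ?thesis .
  qed
  have ser_h: "(\<lambda>m. d m * (\<i> * complex_of_real h)^m * complex_of_real (SS n m)) sums complex_of_real (I h)" for h
  proof -
    have "(\<lambda>m. \<Sum>k\<le>n. \<Sum>l\<le>n. w k l * (d m * (\<i> * complex_of_real ((real k - real l) * h))^m)) sums (\<Sum>k\<le>n. \<Sum>l\<le>n. w k l * char \<mu> ((real k - real l) * h))"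
      unfolding chF by (intro sums_sum sums_mult Fser)
    moreover have "(\<Sum>k\<le>n. \<Sum>l\<le>n. w k l * (d m * (\<i> * complex_of_real ((real k - real l) * h))^m)) = d m * (\<i> * complex_of_real h)^m * complex_of_real (SS n m)" for m
      unfolding SS_def of_real_sum sum_distrib_left
      by (intro sum.cong refl) (simp add: w_def power_mult_distrib mult_ac)
    ultimately show ?thesis unfolding I_char by simp
  qed
  define a where "a m = d m * \<i>^m * complex_of_real (SS n m)" for m
  have a_small: "m < 2*n \<Longrightarrow> a m = 0" for m by (simp add: a_def SS_small)
  have ser2: "(\<lambda>j. a (j + 2*n) * (complex_of_real h)^j) sums (complex_of_real (I h / h^(2*n)))" if h: "h \<noteq> 0" for h
  proof -
    have "(\<lambda>m. a m * (complex_of_real h)^m) sums complex_of_real (I h)"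
      using ser_h[of h] by (simp add: a_def power_mult_distrib mult_ac)
    from sums_split_initial_segment[OF this, of "2*n"]
    have "(\<lambda>j. a (j + 2*n) * (complex_of_real h)^(j + 2*n)) sums complex_of_real (I h)"
      by (simp add: a_small)
    from sums_divide[OF this, of "(complex_of_real h)^(2*n)"]
    show ?thesis using h by (simp add: power_add)
  qed
  define P where "P z = (\<Sum>j. a (j + 2*n) * z^j)" for z
  have sum1: "summable (\<lambda>j. a (j + 2*n) * 1^j)" using sums_summable[OF ser2[of 1]] by simp
  have contP: "isCont P 0" unfolding P_def by (rule isCont_powser[OF sum1]) simp
  have P0: "P 0 = a (2*n)" unfolding P_def using powser_zero[of "\<lambda>j. a (j+2*n)"] by simp
  have Ph: "P (complex_of_real h) = complex_of_real (I h / h^(2*n))" if "h \<noteq> 0" for h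
    unfolding P_def using ser2[OF that] sums_unique by metis
  have a2n: "a (2*n) = d (2*n) * complex_of_real (fact (2*n))"
  proof -
    have i2: "\<i>^(2*n) * complex_of_real ((-1)^n * fact (2*n)) = complex_of_real (fact (2*n))"
    proof -
      have "\<i>^(2*n) = ((-1)^n :: complex)" by (simp add: power_mult)
      then have "\<i>^(2*n) * complex_of_real ((-1)^n * fact (2*n)) = ((-1)^n * (-1)^n) * complex_of_real (fact (2*n))"
        by simp
      also have "((-1)^n * (-1)^n :: complex) = 1" by (simp add: power_mult_distrib[symmetric])
      finally show ?thesis by simp
    qed
    have "a (2*n) = d (2*n) * (\<i>^(2*n) * complex_of_real ((-1)^n * fact (2*n)))"
      unfolding a_def SS_2n by (simp only: mult.assoc)
    then show ?thesis unfolding i2 .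
  qed
  have hj: "(\<lambda>j. complex_of_real (inverse (real (Suc j)))) \<longlonglongrightarrow> 0"
    using tendsto_of_real[OF LIMSEQ_inverse_real_of_nat, where 'a=complex] by simp
  have limP: "(\<lambda>j. P (complex_of_real (inverse (real (Suc j))))) \<longlonglongrightarrow> a (2*n)"
    using isCont_tendsto_compose[OF contP hj] P0 by simp
  have PhS: "P (complex_of_real (inverse (real (Suc j)))) = complex_of_real (I (inverse (real (Suc j))) / (inverse (real (Suc j)))^(2*n))" for j
    by (rule Ph) simp
  have "(\<lambda>j. complex_of_real (I (inverse (real (Suc j))) / (inverse (real (Suc j)))^(2*n))) \<longlonglongrightarrow> a (2*n)"
    using limP unfolding PhS .
  from tendsto_Re[OF this]
  have limR0: "(\<lambda>j. I (inverse (real (Suc j))) / (inverse (real (Suc j)))^(2*n)) \<longlonglongrightarrow> Re (a (2*n))"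
    by (simp only: Re_complex_of_real)
  have reA: "Re (a (2*n)) = Re (d (2*n)) * fact (2*n)"
    by (simp only: a2n times_complex.sel Re_complex_of_real Im_complex_of_real)
  have limR: "(\<lambda>j. I (inverse (real (Suc j))) / (inverse (real (Suc j)))^(2*n)) \<longlonglongrightarrow> Re (d (2*n)) * fact (2*n)"
    using limR0 unfolding reA .
  have eqI: "I (inverse (real (Suc j))) / (inverse (real (Suc j)))^(2*n) = (LINT x|\<mu>. ((2 - 2 * cos (x / real (Suc j))) * real (Suc j)^2)^n)" for j
  proof -
    have "(2 - 2 * cos (inverse (real (Suc j)) * x))^n / (inverse (real (Suc j)))^(2*n) = ((2 - 2 * cos (x / real (Suc j))) * real (Suc j)^2)^n" for x
    proof -
      have e1: "inverse (real (Suc j)) * x = x / real (Suc j)" by (simp add: divide_inverse mult.commute)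
      have e2: "(inverse (real (Suc j)))^(2*n) = inverse ((real (Suc j)^2)^n)" by (simp add: power_mult power_inverse)
      show ?thesis by (simp only: e1 e2 divide_inverse inverse_inverse_eq power_mult_distrib)
    qed
    then show ?thesis unfolding I_def integral_divide_zero[symmetric] by simp
  qed
  have lim: "(\<lambda>j. LINT x|\<mu>. ((2 - 2 * cos (x / real (Suc j))) * real (Suc j)^2)^n) \<longlonglongrightarrow> Re (d (2*n)) * fact (2*n)"
    using limR unfolding eqI .
  from fatou_moment[OF rd lim] show "(\<integral>\<^sup>+x. ennreal (x^(2*n)) \<partial>\<mu>) = ennreal (Re ((deriv ^^ (2*n)) F 0 / fact (2*n)) * fact (2*n))"
    "0 \<le> Re ((deriv ^^ (2*n)) F 0 / fact (2*n)) * fact (2*n)"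
    unfolding d_def by auto
qed



lemma even_reindex:
  fixes f :: "nat \<Rightarrow> 'a::real_normed_vector"
  assumes "(\<lambda>m. if even m then f m else 0) sums s"
  shows "(\<lambda>n. f (2*n)) sums s"
proof -
  have sm: "strict_mono (\<lambda>n::nat. 2*n)" by (rule strict_monoI) simp
  have "(\<lambda>n. (\<lambda>m. if even m then f m else 0) (2*n)) sums s \<longleftrightarrow> (\<lambda>m. if even m then f m else 0) sums s"
    by (rule sums_mono_reindex[OF sm]) (auto simp: image_def elim!: evenE)
  then show ?thesis using assms by simp
qed

lemma cosh_integral:
  fixes \<mu> :: "real measure" and F :: "complex \<Rightarrow> complex"
  assumes rd: "real_distribution \<mu>" and holF: "F holomorphic_on UNIV"
    and chF: "\<And>s. char \<mu> s = F (\<i> * complex_of_real s)"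
    and Feven: "\<And>z. F (-z) = F z"
  shows "(\<integral>\<^sup>+x. ennreal (cosh (t * x)) \<partial>\<mu>) = ennreal (Re (F (complex_of_real t)))"
proof -
  interpret real_distribution \<mu> by (rule rd)
  define d where "d m = (deriv ^^ m) F 0 / fact m" for m
  have Fser: "(\<lambda>m. d m * w^m) sums F w" for w
  proof -
    have "F holomorphic_on ball 0 (norm w + 1)" using holF holomorphic_on_subset by blast
    from holomorphic_power_series[OF this, of w] show ?thesis by (simp add: d_def)
  qed
  have mom1: "(\<integral>\<^sup>+x. ennreal (x^(2*n)) \<partial>\<mu>) = ennreal (Re (d (2*n)) * fact (2*n))" for n
    using moments_from_char(1)[OF rd holF chF, of n] by (simp add: d_def)
  have mom2: "0 \<le> Re (d (2*n))" for n
  proof -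
    have h: "0 \<le> Re (d (2*n)) * fact (2*n)"
      using moments_from_char(2)[OF rd holF chF, of n] by (simp add: d_def)
    show ?thesis using divide_nonneg_pos[OF h fact_gt_zero[of "2*n"]] by simp
  qed
  have ev: "(\<lambda>n. Re (d (2*n)) * t^(2*n)) sums Re (F (complex_of_real t))"
  proof -
    have s1: "(\<lambda>m. d m * (complex_of_real t)^m) sums F (complex_of_real t)" by (rule Fser)
    have s2: "(\<lambda>m. d m * (- complex_of_real t)^m) sums F (complex_of_real t)"
      using Fser[of "- complex_of_real t"] Feven by simp
    have s3: "(\<lambda>m. (d m * (complex_of_real t)^m + d m * (- complex_of_real t)^m) / 2) sums F (complex_of_real t)"
      using sums_divide[OF sums_add[OF s1 s2], of 2] by simp
    have eqm: "(d m * (complex_of_real t)^m + d m * (- complex_of_real t)^m) / 2 = (if even m then d m * (complex_of_real t)^m else 0)" for m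
      by (cases "even m") simp_all
    have s4: "(\<lambda>m. if even m then d m * (complex_of_real t)^m else 0) sums F (complex_of_real t)"
      using s3 unfolding eqm .
    from sums_Re[OF even_reindex[OF s4]] show ?thesis
      by (simp add: of_real_power[symmetric] del: of_real_power)
  qed
  have chs: "(\<lambda>n. (t*x)^(2*n) / fact (2*n)) sums cosh (t*x)" for x
  proof -
    have e: "(\<lambda>n. if even n then (t*x)^n /\<^sub>R fact n else 0) = (\<lambda>m. if even m then (t*x)^m / fact m else 0)"
      by (rule ext) (simp add: divide_inverse mult.commute)
    have "(\<lambda>m. if even m then (t*x)^m / fact m else 0) sums cosh (t*x)"
      using cosh_converges[of "t*x"] unfolding e .
    from even_reindex[OF this] show ?thesis .
  qed
  have pe: "0 \<le> (y::real)^(2*n)" for y n by (simp add: power_mult)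
  have nn: "0 \<le> (t*x)^(2*n) / fact (2*n)" for x n using pe[of "t*x" n] by simp
  have "(\<integral>\<^sup>+x. ennreal (cosh (t * x)) \<partial>\<mu>) = (\<integral>\<^sup>+x. (\<Sum>n. ennreal ((t*x)^(2*n) / fact (2*n))) \<partial>\<mu>)"
  proof (rule nn_integral_cong)
    fix x
    show "ennreal (cosh (t * x)) = (\<Sum>n. ennreal ((t*x)^(2*n) / fact (2*n)))"
      using suminf_ennreal2[OF nn sums_summable[OF chs[of x]]] sums_unique[OF chs[of x]] by simp
  qed
  also have "\<dots> = (\<Sum>n. \<integral>\<^sup>+x. ennreal ((t*x)^(2*n) / fact (2*n)) \<partial>\<mu>)"
    by (rule nn_integral_suminf) simp
  also have "\<dots> = (\<Sum>n. ennreal (Re (d (2*n)) * t^(2*n)))"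
  proof (rule arg_cong[where f=suminf], rule ext)
    fix n
    have "(\<integral>\<^sup>+x. ennreal ((t*x)^(2*n) / fact (2*n)) \<partial>\<mu>) = (\<integral>\<^sup>+x. ennreal (t^(2*n) / fact (2*n)) * ennreal (x^(2*n)) \<partial>\<mu>)"
      by (rule nn_integral_cong) (simp add: ennreal_mult[symmetric] pe power_mult_distrib)
    also have "\<dots> = ennreal (t^(2*n) / fact (2*n)) * (\<integral>\<^sup>+x. ennreal (x^(2*n)) \<partial>\<mu>)"
      by (rule nn_integral_cmult) simp
    also have "\<dots> = ennreal (t^(2*n) / fact (2*n) * (Re (d (2*n)) * fact (2*n)))"
      unfolding mom1 by (rule ennreal_mult[symmetric]) (simp_all add: pe mom2)
    also have "t^(2*n) / fact (2*n) * (Re (d (2*n)) * fact (2*n)) = Re (d (2*n)) * t^(2*n)"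
      by simp
    finally show "(\<integral>\<^sup>+x. ennreal ((t*x)^(2*n) / fact (2*n)) \<partial>\<mu>) = ennreal (Re (d (2*n)) * t^(2*n))" .
  qed
  also have "\<dots> = ennreal (\<Sum>n. Re (d (2*n)) * t^(2*n))"
    by (rule suminf_ennreal2) (simp_all add: mom2 pe sums_summable[OF ev])
  also have "\<dots> = ennreal (Re (F (complex_of_real t)))"
    using sums_unique[OF ev] by simp
  finally show ?thesis .
qed



theorem lemma17:
  fixes M :: "'a measure" and X :: "'a \<Rightarrow> real" and \<alpha> :: real
  assumes "prob_space M"
    and "X \<in> borel_measurable M"
    and "1 < \<alpha>" and "\<alpha> < 2"
    and "\<And>s. char (distr M borel X) s =
           complex_of_real (exp (2 * (LBINT x:{0<..1}. (cos (s * x) - 1) / x powr (\<alpha> + 1))))"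
  shows "ennreal (exp (t\<^sup>2 / (2 - \<alpha>))) \<le> (\<integral>\<^sup>+ \<omega>. ennreal (exp (t * X \<omega>)) \<partial>M)
    \<and> (\<integral>\<^sup>+ \<omega>. ennreal (exp (t * X \<omega>)) \<partial>M)
        \<le> ennreal (exp (1/24 * t^4 * (14/15 + 1/15 * cosh t)) * exp (t\<^sup>2 / (2 - \<alpha>)))"
proof -
  interpret P: prob_space M by (rule assms(1))
  have Xm[measurable]: "X \<in> borel_measurable M" by (rule assms(2))
  have a2: "\<alpha> < 2" by (rule assms(4))
  define \<mu> where "\<mu> = distr M borel X"
  have rd: "real_distribution \<mu>" unfolding \<mu>_def by (rule P.real_distribution_distr) simp
  define \<psi>c where "\<psi>c z = (\<Sum>m. complex_of_real (cc \<alpha> m) * z^m)" for z :: complex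
  define F where "F z = exp (2 * \<psi>c z)" for z
  have summc: "summable (\<lambda>m. complex_of_real (cc \<alpha> m) * z^m)" for z
    using cc_summable[OF a2] .
  have hol\<psi>: "\<psi>c holomorphic_on UNIV"
  proof -
    have "(\<psi>c has_field_derivative (\<Sum>m. diffs (\<lambda>m. complex_of_real (cc \<alpha> m)) m * z^m)) (at z)" for z
      unfolding \<psi>c_def by (rule termdiffs_strong_converges_everywhere[OF summc])
    then show ?thesis unfolding holomorphic_on_def field_differentiable_def
      by (auto intro: has_field_derivative_at_within)
  qed
  have holF: "F holomorphic_on UNIV" unfolding F_def by (intro holomorphic_intros hol\<psi>)
  have \<psi>real: "\<psi>c (complex_of_real r) = complex_of_real (\<Sum>m. cc \<alpha> m * r^m)" for r
  proof -
    have sr: "summable (\<lambda>m. cc \<alpha> m * r^m)" using cc_summable[OF a2, of r] by simp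
    have "(\<lambda>m. complex_of_real (cc \<alpha> m * r^m)) sums complex_of_real (\<Sum>m. cc \<alpha> m * r^m)"
      unfolding sums_of_real_iff by (rule summable_sums[OF sr])
    then show ?thesis unfolding \<psi>c_def by (simp add: sums_unique[symmetric])
  qed
  have \<psi>imag: "\<psi>c (\<i> * complex_of_real s) = complex_of_real (\<Sum>m. cc \<alpha> m * (-1)^(m div 2) * s^m)" for s
  proof -
    have tm: "complex_of_real (cc \<alpha> m) * (\<i> * complex_of_real s)^m = complex_of_real (cc \<alpha> m * (-1)^(m div 2) * s^m)" for m
    proof (cases "even m")
      case True
      then obtain k where k: "m = 2*k" by (auto elim!: evenE)
      have "\<i>^m = (-1)^k" unfolding k by (simp add: power_mult)
      then show ?thesis using k by (simp add: power_mult_distrib)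
    next
      case False
      have "cc \<alpha> m = 0" unfolding cc_def using False by simp
      then show ?thesis by simp
    qed
    have "summable (\<lambda>m. complex_of_real (cc \<alpha> m * (-1)^(m div 2) * s^m))"
      using summc[of "\<i> * complex_of_real s"] unfolding tm .
    then have sr: "summable (\<lambda>m. cc \<alpha> m * (-1)^(m div 2) * s^m)"
      by (simp only: summable_of_real_iff)
    have "(\<lambda>m. complex_of_real (cc \<alpha> m * (-1)^(m div 2) * s^m)) sums complex_of_real (\<Sum>m. cc \<alpha> m * (-1)^(m div 2) * s^m)"
      unfolding sums_of_real_iff by (rule summable_sums[OF sr])
    then show ?thesis unfolding \<psi>c_def tm by (simp add: sums_unique[symmetric])
  qed
  have chF: "char \<mu> s = F (\<i> * complex_of_real s)" for s
  proof -
    have "char \<mu> s = complex_of_real (exp (2 * (\<Sum>m. cc \<alpha> m * (-1)^(m div 2) * s^m)))"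
      unfolding \<mu>_def assms(5) L_series[OF a2] ..
    also have "\<dots> = F (\<i> * complex_of_real s)"
      unfolding F_def \<psi>imag by (simp add: exp_of_real[symmetric])
    finally show ?thesis .
  qed
  have Feven: "F (-z) = F z" for z
  proof -
    have e: "complex_of_real (cc \<alpha> m) * (-z)^m = complex_of_real (cc \<alpha> m) * z^m" for m
    proof (cases "even m")
      case True then show ?thesis by simp
    next
      case False
      have "cc \<alpha> m = 0" unfolding cc_def using False by simp
      then show ?thesis by simp
    qed
    have "(\<lambda>m. complex_of_real (cc \<alpha> m) * (-z)^m) = (\<lambda>m. complex_of_real (cc \<alpha> m) * z^m)"
      by (rule ext) (rule e)
    then show ?thesis unfolding F_def \<psi>c_def by simp
  qed
  define S where "S = (\<Sum>m. cc \<alpha> m * t^m)"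
  have cosh_eq: "(\<integral>\<^sup>+x. ennreal (cosh (t * x)) \<partial>\<mu>) = ennreal (Re (F (complex_of_real t)))"
    by (rule cosh_integral[OF rd holF chF Feven])
  have FR: "Re (F (complex_of_real t)) = exp (2 * S)"
  proof -
    have "F (complex_of_real t) = exp (complex_of_real (2*S))" unfolding F_def \<psi>real S_def by simp
    also have "\<dots> = complex_of_real (exp (2*S))" by (rule exp_of_real)
    finally show ?thesis by simp
  qed
  have Xneg[measurable]: "(\<lambda>\<omega>. - X \<omega>) \<in> borel_measurable M" by measurable
  have sym: "distr M borel (\<lambda>\<omega>. - X \<omega>) = \<mu>"
  proof (rule Levy_uniqueness)
    show "real_distribution (distr M borel (\<lambda>\<omega>. - X \<omega>))" by (rule P.real_distribution_distr) simp
    show "real_distribution \<mu>" by (rule rd)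
    show "char (distr M borel (\<lambda>\<omega>. - X \<omega>)) = char \<mu>"
    proof
      fix s
      have "char (distr M borel (\<lambda>\<omega>. - X \<omega>)) s = (CLINT \<omega>|M. iexp (s * - X \<omega>))"
        unfolding char_def by (rule integral_distr) simp_all
      also have "\<dots> = (CLINT \<omega>|M. iexp ((-s) * X \<omega>))" by simp
      also have "\<dots> = char \<mu> (-s)"
        unfolding char_def \<mu>_def by (rule integral_distr[symmetric]) simp_all
      also have "\<dots> = char \<mu> s"
        unfolding \<mu>_def assms(5) by simp
      finally show "char (distr M borel (\<lambda>\<omega>. - X \<omega>)) s = char \<mu> s" .
    qed
  qed
  define A where "A = (\<integral>\<^sup>+x. ennreal (exp (t*x)) \<partial>\<mu>)"
  have A1: "(\<integral>\<^sup>+\<omega>. ennreal (exp (t * X \<omega>)) \<partial>M) = A"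
    unfolding A_def \<mu>_def by (subst nn_integral_distr) simp_all
  have A2: "(\<integral>\<^sup>+x. ennreal (exp (- t * x)) \<partial>\<mu>) = A"
  proof -
    have "(\<integral>\<^sup>+x. ennreal (exp (- t * x)) \<partial>\<mu>) = (\<integral>\<^sup>+\<omega>. ennreal (exp (- t * X \<omega>)) \<partial>M)"
      unfolding \<mu>_def by (subst nn_integral_distr) simp_all
    also have "\<dots> = (\<integral>\<^sup>+\<omega>. ennreal (exp (t * (- X \<omega>))) \<partial>M)" by simp
    also have "\<dots> = (\<integral>\<^sup>+x. ennreal (exp (t * x)) \<partial>(distr M borel (\<lambda>\<omega>. - X \<omega>)))"
      by (subst nn_integral_distr) simp_all
    also have "\<dots> = A" unfolding sym A_def ..
    finally show ?thesis .
  qed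
  have meas_mu: "f \<in> borel_measurable \<mu>" if "f \<in> borel_measurable borel" for f :: "real \<Rightarrow> ennreal"
    using that unfolding \<mu>_def by simp
  have m1: "(\<lambda>x. ennreal (exp (t*x))) \<in> borel_measurable \<mu>" by (rule meas_mu) measurable
  have m2: "(\<lambda>x. ennreal (exp (- t*x))) \<in> borel_measurable \<mu>" by (rule meas_mu) measurable
  have m3: "(\<lambda>x. ennreal (cosh (t*x))) \<in> borel_measurable \<mu>" by (rule meas_mu) (unfold cosh_def, measurable)
  have "2 * (\<integral>\<^sup>+x. ennreal (cosh (t * x)) \<partial>\<mu>) = (\<integral>\<^sup>+x. 2 * ennreal (cosh (t * x)) \<partial>\<mu>)"
    by (rule nn_integral_cmult[symmetric]) (rule m3)
  also have "\<dots> = (\<integral>\<^sup>+x. ennreal (exp (t*x)) + ennreal (exp (- t * x)) \<partial>\<mu>)"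
  proof (rule nn_integral_cong)
    fix x
    have "2 * ennreal (cosh (t * x)) = ennreal (2 * cosh (t * x))" by (simp add: ennreal_mult)
    also have "2 * cosh (t * x) = exp (t * x) + exp (- t * x)" by (simp add: cosh_def)
    also have "ennreal (exp (t * x) + exp (- t * x)) = ennreal (exp (t*x)) + ennreal (exp (- t * x))"
      by (rule ennreal_plus) simp_all
    finally show "2 * ennreal (cosh (t * x)) = ennreal (exp (t*x)) + ennreal (exp (- t * x))" .
  qed
  also have "\<dots> = (\<integral>\<^sup>+x. ennreal (exp (t*x)) \<partial>\<mu>) + (\<integral>\<^sup>+x. ennreal (exp (- t * x)) \<partial>\<mu>)"
    by (rule nn_integral_add[OF m1 m2])
  also have "\<dots> = A + A" unfolding A2 A_def ..
  also have "\<dots> = 2 * A" by (simp add: mult_2)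
  finally have "2 * A = 2 * ennreal (exp (2 * S))" unfolding cosh_eq FR ..
  then have AS: "A = ennreal (exp (2 * S))" by (simp add: ennreal_mult_cancel_left)
  have lo: "t\<^sup>2 / (2 - \<alpha>) \<le> 2 * S" unfolding S_def by (rule series_bounds(1)[OF a2])
  have up: "2 * S \<le> 1/24 * t^4 * (14/15 + 1/15 * cosh t) + t\<^sup>2 / (2 - \<alpha>)" unfolding S_def by (rule series_bounds(2)[OF a2])
  show ?thesis
    unfolding A1 AS
  proof
    show "ennreal (exp (t\<^sup>2 / (2 - \<alpha>))) \<le> ennreal (exp (2 * S))"
      using lo by (intro ennreal_leI) simp
    show "ennreal (exp (2 * S)) \<le> ennreal (exp (1/24 * t^4 * (14/15 + 1/15 * cosh t)) * exp (t\<^sup>2 / (2 - \<alpha>)))"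
      using up by (intro ennreal_leI) (simp add: exp_add[symmetric])
  qed
qed


end
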